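(* Let $n\in\mathbb{N}$ with $n\ge2$, $S:=\{0,\dots,n-1\}$, and let $C\subseteq\operatorname{codes}(S)$ be a fundamental set. Let $\rho,\sigma\in(0,\infty)^S$ be such that $\alpha(x)|_\rho\le 2\pi\le\alpha(x)|_\sigma$ for all $x\in C$. Then \[ \frac{\sigma(n-2)}{\sigma(n-1)}\le\frac{\rho(n-2)}{\rho(n-1)}. \]
   Context: A coronal code over $S$ of length $m$ is a formal string $x=c:p_0p_1\dots p_{m-1}$ with $c,p_i\in S$; $\operatorname{center}(x)=c$, $\operatorname{petals}(x)=\{p_0,\dots,p_{m-1}\}$; codes are identified up to rotation/reversal of the petal string, giving $\operatorname{codes}(S)$. For $a,b,c\in S$ (indeterminates), $c^a_b:=\arccos\!\Big(\frac{(c+a)^2+(c+b)^2-(a+b)^2}{2(c+a)(c+b)}\Big)$, and $\alpha(x):=\sum_{i=0}^{m-1} c^{p_i}_{p_{i+1\bmod m}}$. For $\rho\in(0,\infty)^S$, $\alpha(x)|_\rho$ is the value obtained by substituting $\rho(s)$ for each symbol $s$. A nonempty $C\subseteq\operatorname{codes}(S)$ is fundamental if $\{\operatorname{center}(x):x\in C\}=\{0,\dots,n-2\}$ and for every nonempty $K\subseteq\{0,\dots,n-2\}$ there is $D\subseteq C$ with $\{\operatorname{center}(x):x\in D\}=K$ and $\big(\bigcup_{x\in D}\operatorname{petals}(x)\big)\setminus K\ne\emptyset$. *)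

theory Defs
  imports Complex_Main
begin

text \<open>A coronal code c:p_0...p_{m-1} is represented by the pair (c, [p_0,...,p_{m-1}]).
  All notions below (center, petals, alpha) are invariant under rotation/reversal of the
  petal string, so a set of codes is represented by a set of representatives.\<close>

type_synonym 'a coronal_code = "'a \<times> 'a list"

definition center :: "'a coronal_code \<Rightarrow> 'a" where
  "center x = fst x"

definition petals :: "'a coronal_code \<Rightarrow> 'a set" where
  "petals x = set (snd x)"

definition codes :: "'a set \<Rightarrow> 'a coronal_code set" where
  "codes S = {(c, ps). c \<in> S \<and> set ps \<subseteq> S \<and> ps \<noteq> []}"

definition corner_angle :: "real \<Rightarrow> real \<Rightarrow> real \<Rightarrow> real" where
  "corner_angle c a b =
     arccos (((c + a)\<^sup>2 + (c + b)\<^sup>2 - (a + b)\<^sup>2) / (2 * (c + a) * (c + b)))"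

definition alpha_at :: "('a \<Rightarrow> real) \<Rightarrow> 'a coronal_code \<Rightarrow> real" where
  "alpha_at \<rho> x = (let c = fst x; ps = snd x; m = length ps in
     (\<Sum>i<m. corner_angle (\<rho> c) (\<rho> (ps ! i)) (\<rho> (ps ! ((i + 1) mod m)))))"

definition fundamental :: "nat \<Rightarrow> nat coronal_code set \<Rightarrow> bool" where
  "fundamental n C \<longleftrightarrow> C \<noteq> {} \<and> center ` C = {0..n-2} \<and>
     (\<forall>K. K \<noteq> {} \<longrightarrow> K \<subseteq> {0..n-2} \<longrightarrow>
        (\<exists>D \<subseteq> C. center ` D = K \<and> (\<Union>x\<in>D. petals x) - K \<noteq> {}))"

end

theory Submission imports Defs begin

definition gg :: "real \<Rightarrow> real \<Rightarrow> real" where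
  "gg u v = 1 - 2 / ((1 + u) * (1 + v))"

lemma corner_eq:
  assumes "c > 0" "a > 0" "b > 0"
  shows "corner_angle c a b = arccos (gg (c/a) (c/b))"
proof -
  have "((c + a)\<^sup>2 + (c + b)\<^sup>2 - (a + b)\<^sup>2) / (2 * (c + a) * (c + b)) = gg (c/a) (c/b)"
  proof -
    have d: "(c+a)*(c+b) > 0" using assms by simp
    have e: "(1 + c/a) * (1 + c/b) = (c+a)*(c+b)/(a*b)" using assms by (simp add: field_simps)
    have "gg (c/a) (c/b) = 1 - 2*(a*b)/((c+a)*(c+b))" unfolding gg_def e using assms by simp
    also have "\<dots> = ((c + a)\<^sup>2 + (c + b)\<^sup>2 - (a + b)\<^sup>2) / (2 * (c + a) * (c + b))"
      using d assms by (simp add: divide_simps power2_eq_square) (simp add: algebra_simps)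
    finally show ?thesis by simp
  qed
  then show ?thesis unfolding corner_angle_def by simp
qed

lemma gg_bounds:
  assumes "u > 0" "v > 0" shows "-1 < gg u v" "gg u v < 1"
proof -
  have p: "(1+u)*(1+v) > 1" using assms by (simp add: algebra_simps add_pos_pos)
  then have "2 / ((1+u)*(1+v)) < 2" by (simp add: divide_less_eq)
  then show "-1 < gg u v" unfolding gg_def by simp
  have "2 / ((1+u)*(1+v)) > 0" using p by simp
  then show "gg u v < 1" unfolding gg_def by simp
qed

lemma gg_mono:
  assumes "0 < u" "u \<le> u'" "0 < v" "v \<le> v'"
  shows "gg u v \<le> gg u' v'"
proof -
  have "(1+u)*(1+v) \<le> (1+u')*(1+v')" using assms by (intro mult_mono) auto
  moreover have "(1+u)*(1+v) > 0" using assms by simp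
  ultimately have "2 / ((1+u')*(1+v')) \<le> 2 / ((1+u)*(1+v))"
    by (intro divide_left_mono) auto
  then show ?thesis unfolding gg_def by simp
qed

lemma gg_strict:
  assumes "0 < u" "u < u'" "0 < v" "v \<le> v'"
  shows "gg u v < gg u' v'"
proof -
  have "(1+u)*(1+v) < (1+u')*(1+v)" using assms by (intro mult_strict_right_mono) auto
  also have "\<dots> \<le> (1+u')*(1+v')" using assms by (intro mult_left_mono) auto
  finally have lt: "(1+u)*(1+v) < (1+u')*(1+v')" .
  have "(1+u)*(1+v) > 0" using assms by simp
  then have "2 / ((1+u')*(1+v')) < 2 / ((1+u)*(1+v))"
    using lt by (intro divide_strict_left_mono) auto
  then show ?thesis unfolding gg_def by simp
qed

lemma corner_mono:
  assumes "c>0" "a>0" "b>0" "c'>0" "a'>0" "b'>0" "c/a \<le> c'/a'" "c/b \<le> c'/b'"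
  shows "corner_angle c' a' b' \<le> corner_angle c a b"
proof -
  have "gg (c/a) (c/b) \<le> gg (c'/a') (c'/b')" using assms by (intro gg_mono) auto
  moreover have "-1 \<le> gg (c/a) (c/b)" "gg (c'/a') (c'/b') \<le> 1"
    using gg_bounds assms by (smt (verit) divide_pos_pos)+
  ultimately show ?thesis using assms by (simp add: corner_eq arccos_le_arccos)
qed

lemma corner_strict:
  assumes "c>0" "a>0" "b>0" "c'>0" "a'>0" "b'>0" "c/a < c'/a'" "c/b \<le> c'/b'"
  shows "corner_angle c' a' b' < corner_angle c a b"
proof -
  have "gg (c/a) (c/b) < gg (c'/a') (c'/b')" using assms by (intro gg_strict) auto
  moreover have "-1 \<le> gg (c/a) (c/b)" "gg (c'/a') (c'/b') \<le> 1"
    using gg_bounds assms by (smt (verit) divide_pos_pos)+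
  ultimately show ?thesis using assms by (simp add: corner_eq arccos_less_arccos)
qed

lemma corner_strict2:
  assumes "c>0" "a>0" "b>0" "c'>0" "a'>0" "b'>0" "c/a \<le> c'/a'" "c/b < c'/b'"
  shows "corner_angle c' a' b' < corner_angle c a b"
proof -
  have "corner_angle c' a' b' = corner_angle c' b' a'" "corner_angle c a b = corner_angle c b a"
    unfolding corner_angle_def by (simp_all add: algebra_simps)
  then show ?thesis using corner_strict[of c b a c' b' a'] assms by simp
qed

lemma ratio_le:
  assumes "(x::real)>0" "y>0" "x'>0" "y'>0" "x/x' \<le> y/y'"
  shows "y'/y \<le> x'/x"
  using assms by (simp add: field_simps)

lemma ratio_lt:
  assumes "(x::real)>0" "y>0" "x'>0" "y'>0" "x/x' < y/y'"
  shows "y'/y < x'/x"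
  using assms by (simp add: field_simps)

theorem lemma5p1:
  fixes n :: nat and C :: "nat coronal_code set" and \<rho> \<sigma> :: "nat \<Rightarrow> real"
  assumes "n \<ge> 2"
    and "C \<subseteq> codes {0..<n}"
    and "fundamental n C"
    and "\<forall>s\<in>{0..<n}. \<rho> s > 0"
    and "\<forall>s\<in>{0..<n}. \<sigma> s > 0"
    and "\<forall>x\<in>C. alpha_at \<rho> x \<le> 2 * pi \<and> 2 * pi \<le> alpha_at \<sigma> x"
  shows "\<sigma> (n - 2) / \<sigma> (n - 1) \<le> \<rho> (n - 2) / \<rho> (n - 1)"
proof (rule ccontr)
  assume neg: "\<not> ?thesis"
  define r where "r s = \<sigma> s / \<rho> s" for s
  have rp: "\<rho> s > 0" "\<sigma> s > 0" if "s < n" for s using assms(4,5) that by auto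
  have n1: "n - 1 < n" "n - 2 < n" using assms(1) by auto
  have rlt: "r (n-1) < r (n-2)"
    using neg rp[OF n1(1)] rp[OF n1(2)] unfolding r_def by (simp add: field_simps)
  define M where "M = Max (r ` {0..<n})"
  have rM: "r s \<le> M" if "s < n" for s unfolding M_def using that by auto
  obtain s0 where s0: "s0 < n" "r s0 = M"
  proof -
    have "M \<in> r ` {0..<n}" unfolding M_def using n1 by (intro Max_in) auto
    then show ?thesis using that by auto
  qed
  have "s0 \<noteq> n - 1" using s0 rlt rM[OF n1(2)] by auto
  then have s0K: "s0 \<le> n - 2" using s0 by auto
  define K where "K = {s\<in>{0..n-2}. r s = M}"
  have "K \<noteq> {}" "K \<subseteq> {0..n-2}" using s0K s0 unfolding K_def by auto
  then obtain D where D: "D \<subseteq> C" "center ` D = K" "(\<Union>x\<in>D. petals x) - K \<noteq> {}"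
    using assms(3) unfolding fundamental_def by metis
  then obtain x p where x: "x \<in> D" "p \<in> petals x" "p \<notin> K" by blast
  obtain c ps where xcp: "x = (c, ps)" by force
  have xc: "c < n" "set ps \<subseteq> {0..<n}" "ps \<noteq> []"
    using x(1) D(1) assms(2) xcp unfolding codes_def by auto
  have "c \<in> K" using D(2) x(1) xcp unfolding center_def by force
  then have rc: "r c = M" unfolding K_def by auto
  have pin: "p \<in> set ps" using x(2) xcp unfolding petals_def by simp
  then have pn: "p < n" using xc by auto
  have rpl: "r p < M"
  proof (cases "p \<le> n - 2")
    case True then show ?thesis using x(3) rM[OF pn] unfolding K_def by auto
  next
    case False then have "p = n - 1" using pn by auto
    then show ?thesis using rlt rM[OF n1(2)] by auto
  qed
  define m where "m = length ps"
  have m0: "m > 0" using xc unfolding m_def by simp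
  have inn: "ps ! i < n" if "i < m" for i using xc that unfolding m_def by (meson atLeastLessThan_iff nth_mem subsetD)
  have conv: "\<rho> c / \<rho> a \<le> \<sigma> c / \<sigma> a" if "a < n" for a
  proof -
    have "r a \<le> r c" using rM[OF that] rc by simp
    then show ?thesis using rp[OF that] rp[OF xc(1)] unfolding r_def by (simp add: field_simps)
  qed
  have convs: "\<rho> c / \<rho> p < \<sigma> c / \<sigma> p"
  proof -
    have "r p < r c" using rpl rc by simp
    then show ?thesis using rp[OF pn] rp[OF xc(1)] unfolding r_def by (simp add: field_simps)
  qed
  let ?f = "\<lambda>(\<tau>::nat\<Rightarrow>real) i. corner_angle (\<tau> c) (\<tau> (ps ! i)) (\<tau> (ps ! ((i + 1) mod m)))"
  have le: "\<forall>i\<in>{..<m}. ?f \<sigma> i \<le> ?f \<rho> i"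
  proof
    fix i assume "i \<in> {..<m}"
    then have a: "ps ! i < n" and b: "ps ! ((i+1) mod m) < n" using inn m0 by auto
    show "?f \<sigma> i \<le> ?f \<rho> i"
      by (simp, rule corner_mono) (use rp[OF a] rp[OF b] rp[OF xc(1)] conv[OF a] conv[OF b] in auto)
  qed
  obtain i where i: "i < m" "ps ! i = p" using pin unfolding m_def by (metis in_set_conv_nth)
  have b: "ps ! ((i+1) mod m) < n" using inn m0 by auto
  have lt: "?f \<sigma> i < ?f \<rho> i"
    by (simp, rule corner_strict) (use rp[OF pn] rp[OF b] rp[OF xc(1)] convs conv[OF b] i in auto)
  have "alpha_at \<sigma> x < alpha_at \<rho> x"
    unfolding alpha_at_def xcp Let_def fst_conv snd_conv m_def[symmetric]
    apply (rule sum_strict_mono_ex1)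
    using le lt i(1) by auto
  moreover have "x \<in> C" using x(1) D(1) by auto
  ultimately show False using assms(6) by force
qed

end
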